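(* Let $E=(C,V)$ be an approval-based election and let $S\subsetneq C$ be a winning committee under the $t_{\mathrm{maj}}$-Threshold rule with $|S|$ odd. Then for every candidate $c\in C\setminus S$, the committee $S\cup\{c\}$ is also a winning committee under the $t_{\mathrm{maj}}$-Threshold rule.
   Context: An approval-based election $E=(C,V)$ consists of a finite set $C$ of candidates and a list $V=(v_1,\dots,v_n)$ of voters, each identified with its approval ballot $v_i\subseteq C$. Under the $t_{\mathrm{maj}}$-Threshold rule, a voter $v_i$ approves a committee $S\subseteq C$ if $|S\cap v_i|\ge |S|/2$, and the rule outputs (as winning committees) all committees $S\subseteq C$ approved by the largest number of voters. *)

theory Defs
  imports Main
begin

definition election :: "'a set \<Rightarrow> 'a set list \<Rightarrow> bool" where
  "election C V \<longleftrightarrow> finite C \<and> (\<forall>v\<in>set V. v \<subseteq> C)"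

definition tmaj_approves :: "'a set \<Rightarrow> 'a set \<Rightarrow> bool" where
  "tmaj_approves v S \<longleftrightarrow> 2 * card (S \<inter> v) \<ge> card S"

definition tmaj_score :: "'a set list \<Rightarrow> 'a set \<Rightarrow> nat" where
  "tmaj_score V S = length (filter (\<lambda>v. tmaj_approves v S) V)"

definition tmaj_winning :: "'a set \<Rightarrow> 'a set list \<Rightarrow> 'a set \<Rightarrow> bool" where
  "tmaj_winning C V S \<longleftrightarrow> S \<subseteq> C \<and> (\<forall>T. T \<subseteq> C \<longrightarrow> tmaj_score V T \<le> tmaj_score V S)"

end

theory Submission
  imports Defs
begin

lemma approves_insert:
  assumes "finite S" "odd (card S)" "c \<notin> S" "tmaj_approves v S"
  shows "tmaj_approves v (insert c S)"
proof -
  have fin: "finite (S \<inter> v)" using assms(1) by simp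
  have "card (insert c S \<inter> v) \<ge> card (S \<inter> v)"
    by (rule card_mono) (auto simp: assms(1))
  moreover have "2 * card (S \<inter> v) \<ge> card S" using assms(4) by (simp add: tmaj_approves_def)
  moreover have "card (insert c S) = card S + 1" using assms(1,3) by simp
  moreover obtain k where "card S = 2*k+1" using assms(2) oddE by blast
  ultimately show ?thesis unfolding tmaj_approves_def by presburger
qed

lemma filter_len_mono:
  assumes "\<And>x. x \<in> set xs \<Longrightarrow> P x \<Longrightarrow> Q x"
  shows "length (filter P xs) \<le> length (filter Q xs)"
  using assms by (induction xs) auto

theorem mainTheorem12:
  fixes C :: "'a set" and V :: "'a set list" and S :: "'a set" and c :: 'a
  assumes "election C V"
    and "tmaj_winning C V S"
    and "S \<subset> C"
    and "odd (card S)"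
    and "c \<in> C - S"
  shows "tmaj_winning C V (insert c S)"
proof -
  have finS: "finite S" using assms(1,3) unfolding election_def
    using finite_subset by blast
  have "tmaj_score V S \<le> tmaj_score V (insert c S)"
    unfolding tmaj_score_def
    by (rule filter_len_mono) (use approves_insert finS assms(4,5) in auto)
  then show ?thesis using assms(2,3,5) unfolding tmaj_winning_def
    using le_trans by blast
qed

end
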